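(* Let $\bar a,\bar b$ realize the same complete type over $\emptyset$, suppose $tp(\bar a/\bar b)$ is not semi-isolated, and suppose $\varphi(\bar x,\bar a)\in tp(\bar b/\bar a)$ is a formula witnessing that $tp(\bar b/\bar a)$ is semi-isolated (i.e. every realization of $\varphi(\bar x,\bar a)$ realizes $tp(\bar b)$). Let $\bar c$ be any tuple with $tp(\bar c\bar b)=tp(\bar b\bar a)$. Then the formula $\varphi(\bar c,\bar x)\wedge\varphi(\bar x,\bar a)$ forks over $\emptyset$; in particular $tp(\bar b/\bar c\bar a)$ forks over $\emptyset$.
   Context: Work in the monster model of a complete first-order theory $T$. A (possibly partial) type $p$ forks over a set $A$ if there are an $L$-formula $\psi(\bar x,\bar y)$ and tuples $\bar d_i$ ($i<\omega$) such that $p\vdash\psi(\bar x,\bar d_0)$, $tp(\bar d_i/A)=tp(\bar d_0/A)$ for all $i$, and $\{\psi(\bar x,\bar d_i)\mid i<\omega\}$ is $k$-inconsistent for some $k<\omega$; a formula forks if the partial type consisting of it forks. $tp(\bar b/\bar a)$ is semi-isolated if there is a formula $\varphi(\bar x,\bar a)\in tp(\bar b/\bar a)$ every realization of which realizes $tp(\bar b)$. *)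

theory Defs
  imports Main "HOL-Library.Countable_Set"
begin

text \<open>Terms and formulas of a first-order language with function symbols of type 'f and
relation symbols of type 'r (a symbol applied to argument lists of different lengths is
treated as distinct symbols of the corresponding arities).\<close>

datatype 'f trm = Var nat | Fn 'f "'f trm list"

datatype ('f, 'r) fm =
    FFalse
  | FEq "'f trm" "'f trm"
  | FRel 'r "'f trm list"
  | FNeg "('f, 'r) fm"
  | FConj "('f, 'r) fm" "('f, 'r) fm"
  | FEx nat "('f, 'r) fm"

record ('a, 'f, 'r) struc =
  univ :: "'a set"
  fint :: "'f \<Rightarrow> 'a list \<Rightarrow> 'a"
  rint :: "'r \<Rightarrow> 'a list \<Rightarrow> bool"

definition is_struc :: "('a, 'f, 'r) struc \<Rightarrow> bool" where
  "is_struc M \<longleftrightarrow> univ M \<noteq> {} \<and> (\<forall>f xs. set xs \<subseteq> univ M \<longrightarrow> fint M f xs \<in> univ M)"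

fun fvt :: "'f trm \<Rightarrow> nat set" where
  "fvt (Var i) = {i}"
| "fvt (Fn f ts) = (\<Union>t\<in>set ts. fvt t)"

fun fv :: "('f, 'r) fm \<Rightarrow> nat set" where
  "fv FFalse = {}"
| "fv (FEq s t) = fvt s \<union> fvt t"
| "fv (FRel r ts) = (\<Union>t\<in>set ts. fvt t)"
| "fv (FNeg \<phi>) = fv \<phi>"
| "fv (FConj \<phi> \<psi>) = fv \<phi> \<union> fv \<psi>"
| "fv (FEx i \<phi>) = fv \<phi> - {i}"

fun evalt :: "('a, 'f, 'r) struc \<Rightarrow> (nat \<Rightarrow> 'a) \<Rightarrow> 'f trm \<Rightarrow> 'a" where
  "evalt M e (Var i) = e i"
| "evalt M e (Fn f ts) = fint M f (map (evalt M e) ts)"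

fun sat :: "('a, 'f, 'r) struc \<Rightarrow> (nat \<Rightarrow> 'a) \<Rightarrow> ('f, 'r) fm \<Rightarrow> bool" where
  "sat M e FFalse = False"
| "sat M e (FEq s t) = (evalt M e s = evalt M e t)"
| "sat M e (FRel r ts) = rint M r (map (evalt M e) ts)"
| "sat M e (FNeg \<phi>) = (\<not> sat M e \<phi>)"
| "sat M e (FConj \<phi> \<psi>) = (sat M e \<phi> \<and> sat M e \<psi>)"
| "sat M e (FEx i \<phi>) = (\<exists>a\<in>univ M. sat M (e(i := a)) \<phi>)"

text \<open>Only used for formulas whose free variables are among \<open>{..<length xs}\<close>.\<close>
definition holds :: "('a, 'f, 'r) struc \<Rightarrow> ('f, 'r) fm \<Rightarrow> 'a list \<Rightarrow> bool" where
  "holds M \<phi> xs \<longleftrightarrow> sat M (\<lambda>i. xs ! i) \<phi>"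

definition same_tp :: "('a, 'f, 'r) struc \<Rightarrow> 'a list \<Rightarrow> 'a list \<Rightarrow> bool" where
  "same_tp M xs ys \<longleftrightarrow> length xs = length ys \<and>
     (\<forall>\<phi>::('f,'r) fm. fv \<phi> \<subseteq> {..<length xs} \<longrightarrow> (holds M \<phi> xs \<longleftrightarrow> holds M \<phi> ys))"

definition tuples :: "('a, 'f, 'r) struc \<Rightarrow> nat \<Rightarrow> 'a list set" where
  "tuples M n = {xs. set xs \<subseteq> univ M \<and> length xs = n}"

text \<open>A formula with parameters in the variables \<open>x_0,...,x_{n-1}\<close> is an instance
\<open>\<theta>(u_0,...,u_{k-1})\<close> of a formula \<open>\<theta>(v_0,...,v_{k-1})\<close> where each \<open>u_j\<close> is either a
variable \<open>x_i\<close> (Inl i) or a parameter a (Inr a).\<close>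
type_synonym ('a, 'f, 'r) pfm = "('f, 'r) fm \<times> (nat + 'a) list"

definition arg_val :: "'a list \<Rightarrow> nat + 'a \<Rightarrow> 'a" where
  "arg_val xs u = (case u of Inl i \<Rightarrow> xs ! i | Inr a \<Rightarrow> a)"

definition holds_p :: "('a, 'f, 'r) struc \<Rightarrow> ('a, 'f, 'r) pfm \<Rightarrow> 'a list \<Rightarrow> bool" where
  "holds_p M p xs \<longleftrightarrow> holds M (fst p) (map (arg_val xs) (snd p))"

definition wf_pfm :: "('a, 'f, 'r) struc \<Rightarrow> nat \<Rightarrow> ('a, 'f, 'r) pfm \<Rightarrow> bool" where
  "wf_pfm M n p \<longleftrightarrow> fv (fst p) \<subseteq> {..<length (snd p)} \<and>
     (\<forall>u\<in>set (snd p). (\<forall>i. u = Inl i \<longrightarrow> i < n) \<and> (\<forall>a. u = Inr a \<longrightarrow> a \<in> univ M))"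

definition params :: "('a, 'f, 'r) pfm \<Rightarrow> 'a set" where
  "params p = {a. Inr a \<in> set (snd p)}"

definition realizes :: "('a, 'f, 'r) struc \<Rightarrow> nat \<Rightarrow> 'a list \<Rightarrow> ('a, 'f, 'r) pfm set \<Rightarrow> bool" where
  "realizes M n xs P \<longleftrightarrow> xs \<in> tuples M n \<and> (\<forall>p\<in>P. holds_p M p xs)"

definition split_pfm :: "nat \<Rightarrow> ('f, 'r) fm \<Rightarrow> 'a list \<Rightarrow> ('a, 'f, 'r) pfm" where
  "split_pfm n \<phi> d = (\<phi>, map Inl [0..<n] @ map Inr d)"

definition tp_over :: "('a, 'f, 'r) struc \<Rightarrow> 'a list \<Rightarrow> 'a list \<Rightarrow> ('a, 'f, 'r) pfm set" where
  "tp_over M b e = {split_pfm (length b) \<theta> e | \<theta>.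
      fv \<theta> \<subseteq> {..<length b + length e} \<and> holds M \<theta> (b @ e)}"

definition aleph1_saturated :: "('a, 'f, 'r) struc \<Rightarrow> bool" where
  "aleph1_saturated M \<longleftrightarrow> (\<forall>n (P :: ('a,'f,'r) pfm set) A.
      A \<subseteq> univ M \<longrightarrow> countable A \<longrightarrow> (\<forall>p\<in>P. wf_pfm M n p \<and> params p \<subseteq> A) \<longrightarrow>
      (\<forall>Q\<subseteq>P. finite Q \<longrightarrow> (\<exists>xs. realizes M n xs Q)) \<longrightarrow> (\<exists>xs. realizes M n xs P))"

definition semi_isolated :: "('a, 'f, 'r) struc \<Rightarrow> 'a list \<Rightarrow> 'a list \<Rightarrow> bool" where
  "semi_isolated M b a \<longleftrightarrow> (\<exists>\<phi>. fv \<phi> \<subseteq> {..<length b + length a} \<and> holds M \<phi> (b @ a) \<and>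
      (\<forall>b'\<in>tuples M (length b). holds M \<phi> (b' @ a) \<longrightarrow> same_tp M b' b))"

definition forks :: "('a, 'f, 'r) struc \<Rightarrow> nat \<Rightarrow> ('a, 'f, 'r) pfm set \<Rightarrow> bool" where
  "forks M n P \<longleftrightarrow> (\<exists>(\<psi>::('f,'r) fm) (d :: nat \<Rightarrow> 'a list) (k::nat).
      fv \<psi> \<subseteq> {..<n + length (d 0)} \<and>
      (\<forall>i. set (d i) \<subseteq> univ M \<and> same_tp M (d i) (d 0)) \<and>
      (\<forall>xs. realizes M n xs P \<longrightarrow> holds M \<psi> (xs @ d 0)) \<and>
      (\<forall>S::nat set. card S = k \<and> finite S \<longrightarrow>
          \<not> (\<exists>xs\<in>tuples M n. \<forall>i\<in>S. holds M \<psi> (xs @ d i))))"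

end

theory Submission
  imports Defs
begin


fun rent :: "(nat \<Rightarrow> nat) \<Rightarrow> 'f trm \<Rightarrow> 'f trm" where
  "rent f (Var i) = Var (f i)"
| "rent f (Fn g ts) = Fn g (map (rent f) ts)"

fun ren :: "(nat \<Rightarrow> nat) \<Rightarrow> ('f, 'r) fm \<Rightarrow> ('f, 'r) fm" where
  "ren f FFalse = FFalse"
| "ren f (FEq s t) = FEq (rent f s) (rent f t)"
| "ren f (FRel r ts) = FRel r (map (rent f) ts)"
| "ren f (FNeg \<phi>) = FNeg (ren f \<phi>)"
| "ren f (FConj \<phi> \<psi>) = FConj (ren f \<phi>) (ren f \<psi>)"
| "ren f (FEx i \<phi>) = FEx (f i) (ren f \<phi>)"

lemma evalt_rent: "evalt M e (rent f t) = evalt M (e \<circ> f) t"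
  by (induction t) (simp_all cong: map_cong)

lemma fvt_rent: "fvt (rent f t) = f ` fvt t"
  by (induction t) auto

lemma sat_ren: "inj f \<Longrightarrow> sat M e (ren f \<phi>) = sat M (e \<circ> f) \<phi>"
proof (induction \<phi> arbitrary: e)
  case (FEx i \<phi>)
  have "\<And>a. (e(f i := a)) \<circ> f = (e \<circ> f)(i := a)"
    using FEx.prems by (auto simp: fun_eq_iff inj_eq)
  then have "\<And>a. sat M (e(f i := a)) (ren f \<phi>) = sat M ((e \<circ> f)(i := a)) \<phi>"
    using FEx by metis
  then show ?case by (simp only: ren.simps sat.simps)
qed (simp_all add: evalt_rent comp_def)

lemma fv_ren: "inj f \<Longrightarrow> fv (ren f \<phi>) = f ` fv \<phi>"
proof (induction \<phi>)
  case (FEx i \<phi>)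
  then show ?case by (simp add: image_set_diff)
qed (auto simp: fvt_rent)

lemma evalt_cong: "(\<forall>i\<in>fvt t. e i = e' i) \<Longrightarrow> evalt M e t = evalt M e' t"
  by (induction t) (simp_all cong: map_cong)

lemma sat_cong: "(\<forall>i\<in>fv \<phi>. e i = e' i) \<Longrightarrow> sat M e \<phi> = sat M e' \<phi>"
proof (induction \<phi> arbitrary: e e')
  case (FEq s t) then show ?case using evalt_cong[of s e e' M] evalt_cong[of t e e' M] by simp
next
  case (FRel r ts)
  then have "map (evalt M e) ts = map (evalt M e') ts"
    using evalt_cong[of _ e e' M] by (intro map_cong) auto
  then show ?case by (simp only: sat.simps)
next
  case (FEx i \<phi>)
  have "\<And>a. sat M (e(i := a)) \<phi> = sat M (e'(i := a)) \<phi>"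
    by (rule FEx.IH) (use FEx.prems in auto)
  then show ?case by simp
next
  case (FConj \<phi>1 \<phi>2)
  then show ?case by (metis UnCI sat.simps(5) fv.simps(5))
qed auto

lemma sat_exs: "sat M e (foldr FEx vs \<phi>) \<longleftrightarrow>
  (\<exists>e'. (\<forall>i. i \<notin> set vs \<longrightarrow> e' i = e i) \<and> (\<forall>i\<in>set vs. e' i \<in> univ M) \<and> sat M e' \<phi>)"
proof (induction vs arbitrary: e)
  case Nil
  have "(\<forall>i. e' i = e i) \<longleftrightarrow> e' = e" for e' :: "nat \<Rightarrow> 'a" by auto
  then show ?case by auto
next
  case (Cons v vs)
  show ?case
  proof
    assume "sat M e (foldr FEx (v # vs) \<phi>)"
    then obtain a where a: "a \<in> univ M" "sat M (e(v := a)) (foldr FEx vs \<phi>)" by auto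
    then obtain e' where e': "\<forall>i. i \<notin> set vs \<longrightarrow> e' i = (e(v:=a)) i" "\<forall>i\<in>set vs. e' i \<in> univ M" "sat M e' \<phi>"
      using Cons.IH by blast
    show "\<exists>e'. (\<forall>i. i \<notin> set (v#vs) \<longrightarrow> e' i = e i) \<and> (\<forall>i\<in>set (v#vs). e' i \<in> univ M) \<and> sat M e' \<phi>"
      apply (rule exI[of _ e'])
      using e' a by (cases "v \<in> set vs") auto
  next
    assume "\<exists>e'. (\<forall>i. i \<notin> set (v#vs) \<longrightarrow> e' i = e i) \<and> (\<forall>i\<in>set (v#vs). e' i \<in> univ M) \<and> sat M e' \<phi>"
    then obtain e' where e': "\<forall>i. i \<notin> set (v#vs) \<longrightarrow> e' i = e i" "\<forall>i\<in>set (v#vs). e' i \<in> univ M" "sat M e' \<phi>"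
      by blast
    have "sat M (e(v := e' v)) (foldr FEx vs \<phi>)"
      using Cons.IH e' by auto
    then show "sat M e (foldr FEx (v # vs) \<phi>)" using e' by auto
  qed
qed

lemma fv_exs: "fv (foldr FEx vs \<phi>) = fv \<phi> - set vs"
  by (induction vs) auto

fun conjs :: "('f, 'r) fm list \<Rightarrow> ('f, 'r) fm" where
  "conjs [] = FNeg FFalse"
| "conjs (\<theta> # \<Theta>) = FConj \<theta> (conjs \<Theta>)"

lemma sat_conjs: "sat M e (conjs \<Theta>) \<longleftrightarrow> (\<forall>\<theta>\<in>set \<Theta>. sat M e \<theta>)"
  by (induction \<Theta>) auto

lemma fv_conjs: "fv (conjs \<Theta>) = (\<Union>\<theta>\<in>set \<Theta>. fv \<theta>)"
  by (induction \<Theta>) auto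

lemma holds_ren:
  assumes "inj f" "\<forall>i\<in>fv \<phi>. xs ! f i = ys ! i"
  shows "holds M (ren f \<phi>) xs = holds M \<phi> ys"
  unfolding holds_def using assms by (simp add: sat_ren) (rule sat_cong, auto)

lemma holds_cong:
  assumes "\<forall>i\<in>fv \<phi>. xs ! i = ys ! i"
  shows "holds M \<phi> xs = holds M \<phi> ys"
  unfolding holds_def using assms by (intro sat_cong) auto

lemma holds_exs:
  assumes "fv \<phi> \<subseteq> {..<length xs + n}"
  shows "holds M (foldr FEx [length xs..<length xs + n] \<phi>) xs \<longleftrightarrow>
    (\<exists>ys. set ys \<subseteq> univ M \<and> length ys = n \<and> holds M \<phi> (xs @ ys))"
proof
  let ?k = "length xs"
  assume "holds M (foldr FEx [length xs..<length xs + n] \<phi>) xs"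
  then obtain e' where e': "\<forall>i. i \<notin> {?k..<?k+n} \<longrightarrow> e' i = xs ! i" "\<forall>i\<in>{?k..<?k+n}. e' i \<in> univ M" "sat M e' \<phi>"
    unfolding holds_def sat_exs by auto
  define ys where "ys = map (\<lambda>i. e' (?k + i)) [0..<n]"
  have "\<forall>i\<in>fv \<phi>. e' i = (xs@ys) ! i"
  proof
    fix i assume "i \<in> fv \<phi>" then have "i < ?k + n" using assms by auto
    then show "e' i = (xs@ys)!i" using e'(1) by (cases "i < ?k") (auto simp: ys_def nth_append)
  qed
  then have "sat M (\<lambda>i. (xs @ ys) ! i) \<phi>"
    using e'(3) sat_cong by blast
  moreover have "set ys \<subseteq> univ M" using e'(2) by (auto simp: ys_def)
  moreover have "length ys = n" by (simp add: ys_def)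
  ultimately show "\<exists>ys. set ys \<subseteq> univ M \<and> length ys = n \<and> holds M \<phi> (xs @ ys)"
    unfolding holds_def by blast
next
  let ?k = "length xs"
  assume "\<exists>ys. set ys \<subseteq> univ M \<and> length ys = n \<and> holds M \<phi> (xs @ ys)"
  then obtain ys where ys: "set ys \<subseteq> univ M" "length ys = n" "holds M \<phi> (xs @ ys)" by blast
  define e' where "e' = (\<lambda>i. if i \<in> {?k..<?k+n} then ys ! (i - ?k) else xs ! i)"
  have "sat M e' \<phi>"
    using ys(3) unfolding holds_def apply (rule sat_cong[THEN iffD1, rotated])
    using assms ys(2) by (auto simp: e'_def nth_append)
  moreover have "\<forall>i\<in>{?k..<?k+n}. e' i \<in> univ M"
    using ys(1,2) by (auto simp: e'_def intro!: subsetD[OF ys(1)] nth_mem)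
  ultimately show "holds M (foldr FEx [length xs..<length xs + n] \<phi>) xs"
    unfolding holds_def sat_exs by (intro exI[of _ e']) (auto simp: e'_def)
qed



lemma holds_FNeg[simp]: "holds M (FNeg \<phi>) xs \<longleftrightarrow> \<not> holds M \<phi> xs"
  by (simp add: holds_def)
lemma holds_FConj[simp]: "holds M (FConj \<phi> \<psi>) xs \<longleftrightarrow> holds M \<phi> xs \<and> holds M \<psi> xs"
  by (simp add: holds_def)

definition rot :: "nat \<Rightarrow> nat \<Rightarrow> nat \<Rightarrow> nat" where
  "rot k m i = (if i < k then i + m else if i < k + m then i - k else i)"
definition f1 :: "nat \<Rightarrow> nat \<Rightarrow> nat" where
  "f1 n i = (if i < n then i else i + n)"
definition f2 :: "nat \<Rightarrow> nat \<Rightarrow> nat" where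
  "f2 n i = (if i < n then i + n + n else if i < n + n then i else i + n)"
definition h3 :: "nat \<Rightarrow> nat \<Rightarrow> nat" where
  "h3 n i = (if i < n then i else if i < n + n then i + n else if i < n + n + n then i - n else i)"

lemma inj_rot: "inj (rot k m)"
  by (auto simp: inj_def rot_def split: if_splits)
lemma inj_f1: "inj (f1 n)"
  by (auto simp: inj_def f1_def split: if_splits)
lemma inj_f2: "inj (f2 n)"
  by (auto simp: inj_def f2_def split: if_splits)
lemma inj_h3: "inj (h3 n)"
  by (auto simp: inj_def h3_def split: if_splits)
lemma inj_shift: "inj (\<lambda>i::nat. i + n)"
  by (auto simp: inj_def)

lemma same_tp_refl: "same_tp M xs xs"
  by (simp add: same_tp_def)
lemma same_tp_sym: "same_tp M xs ys \<Longrightarrow> same_tp M ys xs"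
  by (simp add: same_tp_def)
lemma same_tp_trans: "same_tp M xs ys \<Longrightarrow> same_tp M ys zs \<Longrightarrow> same_tp M xs zs"
  by (simp add: same_tp_def)

lemma same_tp_sel:
  fixes M :: "('a,'f,'r) struc"
  assumes "same_tp M xs ys" "inj f" "length xs' = m" "length ys' = m"
    "\<forall>i<m. f i < length xs \<and> xs' ! i = xs ! f i \<and> ys' ! i = ys ! f i"
  shows "same_tp M xs' ys'"
  unfolding same_tp_def
proof (intro conjI allI impI)
  show "length xs' = length ys'" using assms by simp
  fix \<rho> :: "('f,'r) fm" assume fv: "fv \<rho> \<subseteq> {..<length xs'}"
  have "holds M \<rho> xs' = holds M (ren f \<rho>) xs"
    by (rule holds_ren[symmetric]) (use assms fv in auto)
  also have "\<dots> = holds M (ren f \<rho>) ys"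
  proof -
    have "fv (ren f \<rho>) \<subseteq> {..<length xs}"
      using fv assms(2-5) by (auto simp: fv_ren)
    then show ?thesis using assms(1) unfolding same_tp_def by auto
  qed
  also have "\<dots> = holds M \<rho> ys'"
    by (rule holds_ren) (use assms fv in auto)
  finally show "holds M \<rho> xs' = holds M \<rho> ys'" .
qed

lemma same_tp_prefix:
  assumes "same_tp M (u @ v) (u' @ v')" "length u = length u'"
  shows "same_tp M u u'"
  using assms by (intro same_tp_sel[OF assms(1), where f=id and m="length u"]) (auto simp: nth_append)

lemma same_tp_suffix:
  assumes "same_tp M (u @ v) (u' @ v')" "length u = length u'"
  shows "same_tp M v v'"
proof -
  have "length v = length v'" using assms unfolding same_tp_def by simp
  then show ?thesis
    using assms by (intro same_tp_sel[OF assms(1), where f="\<lambda>i. i + length u" and m="length v"])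
      (auto simp: nth_append inj_shift)
qed

lemma same_tp_len: "same_tp M xs ys \<Longrightarrow> length xs = length ys"
  by (simp add: same_tp_def)

lemma inv_tp:
  fixes M :: "('a,'f,'r) struc"
  assumes fvt: "fv \<theta> \<subseteq> {..<n+n}"
    and semi: "\<forall>x\<in>tuples M n. holds M \<theta> (x@v) \<longrightarrow> same_tp M x u"
    and lv: "length v = n" and yv: "same_tp M y v" and x': "x' \<in> tuples M n"
    and hx: "holds M \<theta> (x'@y)" and lu: "length u = n"
  shows "same_tp M x' u"
proof -
  have ly: "length y = n" using yv lv by (simp add: same_tp_def)
  have lx: "length x' = n" using x' by (simp add: tuples_def)
  have key: "holds M \<rho> x'" if fvr: "fv \<rho> \<subseteq> {..<n}" and hu: "holds M \<rho> u" for \<rho> :: "('f,'r) fm"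
  proof -
    define inner where "inner = FConj (ren (rot n n) \<theta>) (FNeg (ren (\<lambda>i. i+n) \<rho>))"
    define \<Phi> where "\<Phi> = FNeg (foldr FEx [n..<n+n] inner)"
    have fvi: "fv inner \<subseteq> {..<n+n}"
      using fvt fvr by (auto simp: inner_def fv_ren inj_rot inj_shift rot_def)
    have fvP: "fv \<Phi> \<subseteq> {..<n}"
      using fvi by (auto simp: \<Phi>_def fv_exs)
    have \<Phi>eq: "holds M \<Phi> w \<longleftrightarrow> \<not>(\<exists>x. set x \<subseteq> univ M \<and> length x = n \<and> holds M \<theta> (x@w) \<and> \<not> holds M \<rho> x)"
      if lw: "length w = n" for w
    proof -
      have "holds M \<Phi> w \<longleftrightarrow> \<not>(\<exists>x. set x \<subseteq> univ M \<and> length x = n \<and> holds M inner (w@x))"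
        unfolding \<Phi>_def using holds_exs[of inner w n M] fvi lw by simp
      moreover have "holds M inner (w@x) \<longleftrightarrow> holds M \<theta> (x@w) \<and> \<not> holds M \<rho> x" if "length x = n" for x
      proof -
        have "holds M (ren (rot n n) \<theta>) (w@x) = holds M \<theta> (x@w)"
          by (rule holds_ren) (use fvt lw that in \<open>auto simp: inj_rot rot_def nth_append\<close>)
        moreover have "holds M (ren (\<lambda>i. i+n) \<rho>) (w@x) = holds M \<rho> x"
          by (rule holds_ren) (use fvr lw that in \<open>auto simp: inj_shift nth_append\<close>)
        ultimately show ?thesis by (simp add: inner_def)
      qed
      ultimately show ?thesis by blast
    qed
    have "holds M \<Phi> v"
    proof -
      have "\<not> (holds M \<theta> (x@v) \<and> \<not> holds M \<rho> x)" if "set x \<subseteq> univ M" "length x = n" for x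
      proof
        assume h: "holds M \<theta> (x@v) \<and> \<not> holds M \<rho> x"
        then have "same_tp M x u" using semi that by (auto simp: tuples_def)
        then have "holds M \<rho> x = holds M \<rho> u" using fvr that by (simp add: same_tp_def)
        then show False using h hu by simp
      qed
      then show ?thesis using \<Phi>eq[OF lv] by blast
    qed
    then have "holds M \<Phi> y" using yv fvP ly unfolding same_tp_def by auto
    then show ?thesis using \<Phi>eq[OF ly] x' hx by (auto simp: tuples_def)
  qed
  show ?thesis unfolding same_tp_def
  proof (intro conjI allI impI)
    show "length x' = length u" using lx lu by simp
    fix \<rho> :: "('f,'r) fm" assume "fv \<rho> \<subseteq> {..<length x'}"
    then have fvr: "fv \<rho> \<subseteq> {..<n}" using lx by simp
    show "holds M \<rho> x' = holds M \<rho> u"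
      using key[OF fvr] key[of "FNeg \<rho>"] fvr by auto
  qed
qed

lemma si_of:
  assumes fvt: "fv \<theta> \<subseteq> {..<n+n}"
    and semi: "\<forall>x\<in>tuples M n. holds M \<theta> (x@v) \<longrightarrow> same_tp M x u"
    and lv: "length v = n" and lu: "length u = n" and yv: "same_tp M y v"
    and z: "z \<in> tuples M n" and hz: "holds M \<theta> (z@y)"
  shows "semi_isolated M z y"
proof -
  have ly: "length y = n" using yv lv by (simp add: same_tp_def)
  have lz: "length z = n" using z by (simp add: tuples_def)
  have zu: "same_tp M z u" by (rule inv_tp[OF fvt semi lv yv z hz lu])
  show ?thesis unfolding semi_isolated_def
  proof (intro exI[of _ \<theta>] conjI ballI impI)
    show "fv \<theta> \<subseteq> {..<length z + length y}" using fvt ly lz by simp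
    show "holds M \<theta> (z @ y)" by fact
    fix b' assume "b' \<in> tuples M (length z)" "holds M \<theta> (b' @ y)"
    then have "same_tp M b' u" using inv_tp[OF fvt semi lv yv _ _ lu] lz by auto
    then show "same_tp M b' z" using zu same_tp_sym same_tp_trans by blast
  qed
qed

lemma si_unfold:
  assumes "semi_isolated M u v" "length u = n" "length v = n"
  obtains \<theta> where "fv \<theta> \<subseteq> {..<n+n}" "holds M \<theta> (u@v)"
    "\<forall>x\<in>tuples M n. holds M \<theta> (x@v) \<longrightarrow> same_tp M x u"
  using assms unfolding semi_isolated_def by auto

lemma si_trans:
  assumes s1: "semi_isolated M u v" and s2: "semi_isolated M v w"
    and u: "length u = n" and v: "v \<in> tuples M n" and w: "length w = n"
  shows "semi_isolated M u w"
proof -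
  have lv: "length v = n" using v by (simp add: tuples_def)
  obtain \<theta>1 where t1: "fv \<theta>1 \<subseteq> {..<n+n}" "holds M \<theta>1 (u@v)"
    "\<forall>x\<in>tuples M n. holds M \<theta>1 (x@v) \<longrightarrow> same_tp M x u"
    using si_unfold[OF s1 u lv] by blast
  obtain \<theta>2 where t2: "fv \<theta>2 \<subseteq> {..<n+n}" "holds M \<theta>2 (v@w)"
    "\<forall>x\<in>tuples M n. holds M \<theta>2 (x@w) \<longrightarrow> same_tp M x v"
    using si_unfold[OF s2 lv w] by blast
  define inner where "inner = FConj (ren (f1 n) \<theta>1) (ren (f2 n) \<theta>2)"
  define \<chi> where "\<chi> = foldr FEx [n+n..<n+n+n] inner"
  have fvi: "fv inner \<subseteq> {..<n+n+n}"
    using t1(1) t2(1) by (auto simp: inner_def fv_ren inj_f1 inj_f2 f1_def f2_def)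
  have fvc: "fv \<chi> \<subseteq> {..<n+n}"
    using fvi by (auto simp: \<chi>_def fv_exs)
  have ceq: "holds M \<chi> (x@w) \<longleftrightarrow> (\<exists>y. set y \<subseteq> univ M \<and> length y = n \<and> holds M \<theta>1 (x@y) \<and> holds M \<theta>2 (y@w))"
    if lx: "length x = n" for x
  proof -
    have "holds M \<chi> (x@w) \<longleftrightarrow> (\<exists>y. set y \<subseteq> univ M \<and> length y = n \<and> holds M inner ((x@w)@y))"
      unfolding \<chi>_def using holds_exs[of inner "x@w" n M] fvi lx w by simp
    moreover have "holds M inner ((x@w)@y) \<longleftrightarrow> holds M \<theta>1 (x@y) \<and> holds M \<theta>2 (y@w)" if "length y = n" for y
    proof -
      have "holds M (ren (f1 n) \<theta>1) ((x@w)@y) = holds M \<theta>1 (x@y)"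
        by (rule holds_ren) (use t1(1) lx w that in \<open>auto simp: inj_f1 f1_def nth_append\<close>)
      moreover have "holds M (ren (f2 n) \<theta>2) ((x@w)@y) = holds M \<theta>2 (y@w)"
        by (rule holds_ren) (use t2(1) lx w that in \<open>auto simp: inj_f2 f2_def nth_append\<close>)
      ultimately show ?thesis by (simp add: inner_def)
    qed
    ultimately show ?thesis by blast
  qed
  show ?thesis unfolding semi_isolated_def
  proof (intro exI[of _ \<chi>] conjI ballI impI)
    show "fv \<chi> \<subseteq> {..<length u + length w}" using fvc u w by simp
    show "holds M \<chi> (u @ w)" using ceq[OF u] v t1(2) t2(2) by (auto simp: tuples_def)
    fix b' assume b': "b' \<in> tuples M (length u)" "holds M \<chi> (b' @ w)"
    then obtain y where y: "set y \<subseteq> univ M" "length y = n" "holds M \<theta>1 (b'@y)" "holds M \<theta>2 (y@w)"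
      using ceq u by (auto simp: tuples_def)
    have "same_tp M y v" using t2(3) y by (auto simp: tuples_def)
    then show "same_tp M b' u"
      using inv_tp[OF t1(1) t1(3) lv _ _ y(3) u] b' u by auto
  qed
qed

lemma si_inv:
  assumes s: "semi_isolated M u v" and st: "same_tp M (u@v) (u'@v')"
    and lu: "length u = n" and lv: "length v = n" and lu': "length u' = n" and u': "set u' \<subseteq> univ M"
  shows "semi_isolated M u' v'"
proof -
  obtain \<theta> where t: "fv \<theta> \<subseteq> {..<n+n}" "holds M \<theta> (u@v)"
    "\<forall>x\<in>tuples M n. holds M \<theta> (x@v) \<longrightarrow> same_tp M x u"
    using si_unfold[OF s lu lv] by blast
  have lv': "length v' = n" using same_tp_len[OF st] lu lv lu' by simp
  have vv: "same_tp M v' v" using same_tp_suffix[OF st] lu lu' same_tp_sym by auto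
  have uu: "same_tp M u' u" using same_tp_prefix[OF st] lu lu' same_tp_sym by auto
  have h': "holds M \<theta> (u'@v')" using st t(1,2) lu lv unfolding same_tp_def by auto
  show ?thesis
    by (rule si_of[OF t(1) t(3) lv lu vv]) (use u' lu' h' in \<open>auto simp: tuples_def\<close>)
qed



lemma map_arg_val: "length xs = k \<Longrightarrow> map (arg_val xs) (map Inl [0..<k] @ map Inr e) = xs @ e"
  by (auto simp: arg_val_def comp_def map_nth)

lemma ext_tp:
  fixes M :: "('a,'f,'r) struc"
  assumes sat: "aleph1_saturated M" and st: "same_tp M e e0"
    and e: "set e \<subseteq> univ M" and q0: "set q0 \<subseteq> univ M"
  shows "\<exists>q. set q \<subseteq> univ M \<and> length q = length q0 \<and> same_tp M (q@e) (q0@e0)"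
proof -
  define k where "k = length q0"
  define m where "m = length e"
  have lm0: "length e0 = m" using st by (simp add: same_tp_def m_def)
  define g :: "('f,'r) fm \<Rightarrow> ('a,'f,'r) pfm" where "g = (\<lambda>\<theta>. (\<theta>, map Inl [0..<k] @ map Inr e))"
  define Th where "Th = {\<theta> :: ('f,'r) fm. fv \<theta> \<subseteq> {..<k+m} \<and> holds M \<theta> (q0@e0)}"
  define P where "P = g ` Th"
  have hp: "holds_p M (g \<theta>) xs \<longleftrightarrow> holds M \<theta> (xs @ e)" if "length xs = k" for xs \<theta>
    using that map_arg_val[OF that, of e] by (simp add: holds_p_def g_def)
  have wf: "\<forall>p\<in>P. wf_pfm M k p \<and> params p \<subseteq> set e"
    using e by (auto simp: P_def g_def Th_def wf_pfm_def params_def m_def)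
  have fin: "\<forall>Q\<subseteq>P. finite Q \<longrightarrow> (\<exists>xs. realizes M k xs Q)"
  proof (intro allI impI)
    fix Q assume Q: "Q \<subseteq> P" "finite Q"
    then obtain Ts where Ts: "Ts \<subseteq> Th" "finite Ts" "Q = g ` Ts"
      unfolding P_def by (meson finite_subset_image)
    obtain L where L: "set L = Ts" using finite_list[OF Ts(2)] by blast
    define C where "C = conjs L"
    define \<zeta> where "\<zeta> = foldr FEx [m..<m+k] (ren (rot k m) C)"
    have fvC: "fv C \<subseteq> {..<k+m}" using Ts L by (auto simp: C_def fv_conjs Th_def)
    have fvr: "fv (ren (rot k m) C) \<subseteq> {..<m+k}"
      using fvC by (auto simp: fv_ren inj_rot rot_def)
    have fvz: "fv \<zeta> \<subseteq> {..<m}" using fvr by (auto simp: \<zeta>_def fv_exs)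
    have hren: "holds M (ren (rot k m) C) (w@q) = holds M C (q@w)" if "length w = m" "length q = k" for w q
      by (rule holds_ren) (use fvC that in \<open>auto simp: inj_rot rot_def nth_append\<close>)
    have zeq: "holds M \<zeta> w \<longleftrightarrow> (\<exists>q. set q \<subseteq> univ M \<and> length q = k \<and> holds M C (q@w))"
      if "length w = m" for w
      unfolding \<zeta>_def using holds_exs[of "ren (rot k m) C" w k M] fvr that hren by auto
    have "holds M C (q0@e0)"
      using Ts L by (auto simp: C_def holds_def sat_conjs Th_def)
    then have "holds M \<zeta> e0" using zeq[OF lm0] q0 k_def by auto
    then have "holds M \<zeta> e" using st fvz unfolding same_tp_def by (auto simp: m_def)
    then obtain q where q: "set q \<subseteq> univ M" "length q = k" "holds M C (q@e)"
      using zeq m_def by auto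
    have "realizes M k q Q"
      unfolding realizes_def using q Ts L hp
      by (auto simp: tuples_def C_def holds_def sat_conjs)
    then show "\<exists>xs. realizes M k xs Q" by blast
  qed
  obtain xs where xs: "realizes M k xs P"
    using sat unfolding aleph1_saturated_def
    apply (elim allE[of _ k] allE[of _ P] allE[of _ "set e"])
    using e wf fin countable_finite[of "set e"] by auto
  then have lx: "length xs = k" "set xs \<subseteq> univ M" by (auto simp: realizes_def tuples_def)
  have all: "holds M \<theta> (xs@e)" if "\<theta> \<in> Th" for \<theta>
    using xs that hp[OF lx(1)] by (auto simp: realizes_def P_def)
  have "same_tp M (xs@e) (q0@e0)"
    unfolding same_tp_def
  proof (intro conjI allI impI)
    show "length (xs @ e) = length (q0 @ e0)" using lx lm0 by (simp add: k_def m_def)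
    fix \<rho> :: "('f,'r) fm" assume "fv \<rho> \<subseteq> {..<length (xs @ e)}"
    then have fvr: "fv \<rho> \<subseteq> {..<k+m}" using lx by (simp add: m_def)
    show "holds M \<rho> (xs @ e) = holds M \<rho> (q0 @ e0)"
      using all[of \<rho>] all[of "FNeg \<rho>"] fvr by (auto simp: Th_def)
  qed
  then show ?thesis using lx k_def by blast
qed



lemma map_arg_val2: "length xs = k \<Longrightarrow> map (arg_val xs) (map Inr e @ map Inl [0..<k]) = e @ xs"
  by (auto simp: arg_val_def comp_def map_nth)

theorem mainTheorem6:
  fixes M :: "('a, 'f, 'r) struc"
    and a b c :: "'a list"
    and \<phi> :: "('f, 'r) fm"
  assumes "is_struc M"
    and "aleph1_saturated M"
    and "set a \<subseteq> univ M" and "set b \<subseteq> univ M" and "set c \<subseteq> univ M"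
    and "same_tp M a b"
    and "\<not> semi_isolated M a b"
    and "fv \<phi> \<subseteq> {..<length b + length a}"
    and "holds M \<phi> (b @ a)"
    and "\<forall>b'\<in>tuples M (length b). holds M \<phi> (b' @ a) \<longrightarrow> same_tp M b' b"
    and "same_tp M (c @ b) (b @ a)"
  shows "forks M (length b)
           {(\<phi>, map Inr c @ map Inl [0..<length b]), (\<phi>, map Inl [0..<length b] @ map Inr a)}
         \<and> forks M (length b) (tp_over M b (c @ a))"
proof -
  note sat = assms(2) and ua = assms(3) and ub = assms(4) and uc = assms(5)
    and ab = assms(6) and nsi = assms(7) and hba = assms(9) and cbba = assms(11)
  define n where "n = length b"
  have lb: "length b = n" by (simp add: n_def)
  have la: "length a = n" using ab lb by (simp add: same_tp_def)
  have lc: "length c = n" using same_tp_len[OF cbba] la lb by simp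
  have fvp: "fv \<phi> \<subseteq> {..<n+n}" using assms(8) la lb by simp
  have semip: "\<forall>x\<in>tuples M n. holds M \<phi> (x@a) \<longrightarrow> same_tp M x b" using assms(10) lb by simp
  have hcb: "holds M \<phi> (c@b)" using cbba hba fvp lb lc unfolding same_tp_def by auto
  have ba: "same_tp M b a" using ab same_tp_sym by blast
  have cb: "same_tp M c b" using same_tp_prefix[OF cbba] lc lb by simp
  have ca: "same_tp M c a" using same_tp_trans[OF cb ba] .
  define spec where "spec = (\<lambda>u q. set q \<subseteq> univ M \<and> length q = n + n \<and> same_tp M (q@u) ((c@b)@a))"
  define nxt where "nxt = (\<lambda>u. if u = a then c@b else SOME q. spec u q)"
  have nxt_spec: "spec u (nxt u)" if "set u \<subseteq> univ M" "same_tp M u a" for u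
  proof (cases "u = a")
    case True
    then show ?thesis using ub uc lb lc by (simp add: nxt_def spec_def same_tp_refl)
  next
    case False
    have "\<exists>q. spec u q"
      using ext_tp[OF sat that(2) that(1), of "c@b"] ub uc lb lc by (auto simp: spec_def)
    then show ?thesis using False unfolding nxt_def by (simp add: someI_ex)
  qed
  define E where "E = (\<lambda>k. ((\<lambda>u. take n (nxt u)) ^^ k) a)"
  have E0: "E 0 = a" by (simp add: E_def)
  have ES: "E (Suc k) = take n (nxt (E k))" for k by (simp add: E_def)
  define B where "B = (\<lambda>k. drop n (nxt (E k)))"
  have good: "set (E k) \<subseteq> univ M \<and> same_tp M (E k) a" for k
  proof (induction k)
    case 0 then show ?case using ua by (simp add: E0 same_tp_refl)
  next
    case (Suc k)
    have sp: "spec (E k) (nxt (E k))" using nxt_spec Suc by blast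
    let ?q = "nxt (E k)"
    have "same_tp M (take n ?q @ (drop n ?q @ E k)) (c @ (b @ a))"
      using sp by (simp add: spec_def flip: append_assoc)
    then have "same_tp M (take n ?q) c" using same_tp_prefix sp lc by (fastforce simp: spec_def)
    then have "same_tp M (E (Suc k)) a" using ca same_tp_trans ES by metis
    moreover have "set (E (Suc k)) \<subseteq> univ M" using sp by (auto simp: spec_def ES dest: in_set_takeD)
    ultimately show ?case by blast
  qed
  have lE: "length (E k) = n" for k using good[of k] la by (simp add: same_tp_def)
  have facts: "length (B k) = n \<and> set (B k) \<subseteq> univ M \<and>
      same_tp M (E (Suc k) @ B k @ E k) (c @ b @ a)" for k
  proof -
    have sp: "spec (E k) (nxt (E k))" using nxt_spec good by blast
    have q: "nxt (E k) = E (Suc k) @ B k" by (simp add: ES B_def)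
    have "same_tp M (nxt (E k) @ E k) (c @ b @ a)" using sp by (simp add: spec_def)
    then have "same_tp M (E (Suc k) @ B k @ E k) (c @ b @ a)" by (simp add: q)
    then show ?thesis using sp by (auto simp: spec_def B_def dest: in_set_dropD)
  qed
  have lB: "length (B k) = n" for k using facts by blast
  have tri: "same_tp M (E (Suc k) @ B k @ E k) (c @ b @ a)" for k using facts by blast
  have f_i: "holds M \<phi> (E (Suc k) @ B k)" for k
  proof -
    have "same_tp M ((E (Suc k) @ B k) @ E k) ((c @ b) @ a)" using tri[of k] by simp
    then have "same_tp M (E (Suc k) @ B k) (c @ b)" using same_tp_prefix lE lB lb lc by fastforce
    then show ?thesis using hcb fvp lE lB unfolding same_tp_def by auto
  qed
  have f_ii: "same_tp M (B k @ E k) (b @ a)" for k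
    using same_tp_suffix[OF tri[of k]] lE lc by simp
  have f_iib: "holds M \<phi> (B k @ E k)" for k
    using f_ii[of k] hba fvp lE lB unfolding same_tp_def by auto
  have f_iii: "same_tp M (E k @ B k) (a @ b)" for k
    by (rule same_tp_sel[OF tri[of k] inj_f2[of n], where m="n+n"])
      (use lE lB la lb lc in \<open>auto simp: f2_def nth_append\<close>)
  have f_iv: "same_tp M (E (Suc k) @ E k) (c @ a)" for k
    by (rule same_tp_sel[OF tri[of k] inj_f1[of n], where m="n+n"])
      (use lE lB la lb lc in \<open>auto simp: f1_def nth_append\<close>)
  have f_v: "same_tp M (B k) a" for k
    using same_tp_prefix[OF f_ii[of k]] lB lb ba same_tp_trans by metis
  have Bt: "B k \<in> tuples M n" for k using facts by (auto simp: tuples_def)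
  have Et: "E k \<in> tuples M n" for k using good lE by (auto simp: tuples_def)
  have siphi: "semi_isolated M z y" if "same_tp M y a" "z \<in> tuples M n" "holds M \<phi> (z@y)" for z y
    by (rule si_of[OF fvp semip la lb that])
  have chain: "semi_isolated M (E (Suc k + d)) (B k)" for k d
  proof (induction d)
    case 0 then show ?case using siphi[OF f_v Et f_i] by simp
  next
    case (Suc d)
    let ?m = "Suc k + d"
    have "semi_isolated M (E (Suc ?m)) (B ?m)" using siphi[OF f_v Et f_i] .
    moreover have "semi_isolated M (B ?m) (E ?m)" using siphi[OF conjunct2[OF good] Bt f_iib] .
    ultimately have "semi_isolated M (E (Suc ?m)) (E ?m)"
      using si_trans lE Bt by blast
    then show ?case using si_trans[OF _ Suc.IH lE Et lB] by simp
  qed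
  define \<psi> where "\<psi> = FConj (ren (rot n n) \<phi>) (ren (h3 n) \<phi>)"
  have hpsi: "holds M \<psi> (x@y@z) \<longleftrightarrow> holds M \<phi> (y@x) \<and> holds M \<phi> (x@z)"
    if "length x = n" "length y = n" "length z = n" for x y z
  proof -
    have "holds M (ren (rot n n) \<phi>) (x@y@z) = holds M \<phi> (y@x)"
      by (rule holds_ren) (use fvp that in \<open>auto simp: inj_rot rot_def nth_append\<close>)
    moreover have "holds M (ren (h3 n) \<phi>) (x@y@z) = holds M \<phi> (x@z)"
      by (rule holds_ren) (use fvp that in \<open>auto simp: inj_h3 h3_def nth_append\<close>)
    ultimately show ?thesis by (simp add: \<psi>_def)
  qed
  have fvpsi: "fv \<psi> \<subseteq> {..<n+n+n}"
    using fvp by (auto simp: \<psi>_def fv_ren inj_rot inj_h3 rot_def h3_def)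
  define dd where "dd = (\<lambda>i. E (Suc (2*i)) @ E (2*i))"
  have E1: "E (Suc 0) = c" using ES[of 0] E0 lc by (simp add: nxt_def)
  have dd0: "dd 0 = c @ a" by (simp add: dd_def E1 E0)
  have incons: False if ij: "i < j" and xs: "xs \<in> tuples M n"
    and hi: "holds M \<psi> (xs @ dd i)" and hj: "holds M \<psi> (xs @ dd j)" for i j xs
  proof -
    have lx: "length xs = n" using xs by (simp add: tuples_def)
    have p1: "holds M \<phi> (E (Suc (2*i)) @ xs)" using hi hpsi lx lE by (simp add: dd_def)
    have p2: "holds M \<phi> (xs @ E (2*j))" using hj hpsi lx lE by (simp add: dd_def)
    have "same_tp M xs b" using inv_tp[OF fvp semip la conjunct2[OF good] xs p2 lb] .
    then have xa: "same_tp M xs a" using ba same_tp_trans by blast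
    have S1: "semi_isolated M (E (Suc (2*i))) xs" using siphi[OF xa Et p1] .
    have S2: "semi_isolated M xs (E (2*j))" using siphi[OF conjunct2[OF good] xs p2] .
    have eq: "Suc (Suc (2*i)) + (2*j - Suc (Suc (2*i))) = 2*j" using ij by simp
    have S3: "semi_isolated M (E (2*j)) (B (Suc (2*i)))" using chain[of "Suc (2*i)" "2*j - Suc (Suc (2*i))"] eq by (simp only:)
    have "semi_isolated M xs (B (Suc (2*i)))" using si_trans[OF S2 S3 lx Et lB] .
    then have "semi_isolated M (E (Suc (2*i))) (B (Suc (2*i)))" using si_trans[OF S1 _ lE xs lB] by blast
    then have "semi_isolated M a b" using si_inv[OF _ f_iii lE lB la ua] by blast
    then show False using nsi by simp
  qed
  have forks_gen: "forks M n P" if real: "\<forall>xs. realizes M n xs P \<longrightarrow> holds M \<psi> (xs @ c @ a)" for P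
    unfolding forks_def
  proof (intro exI[of _ \<psi>] exI[of _ dd] exI[of _ "2::nat"] conjI allI impI)
    show "fv \<psi> \<subseteq> {..<n + length (dd 0)}" using fvpsi by (simp add: dd0 lc la add.assoc)
    fix i show "set (dd i) \<subseteq> univ M" using good by (simp add: dd_def)
  next
    fix i show "same_tp M (dd i) (dd 0)" unfolding dd0 by (simp add: dd_def f_iv)
  next
    fix xs assume "realizes M n xs P" then show "holds M \<psi> (xs @ dd 0)" using real dd0 by simp
  next
    fix S :: "nat set" assume "card S = 2 \<and> finite S"
    then obtain x y where S: "S = {x, y}" "x \<noteq> y" by (meson card_2_iff)
    show "\<not> (\<exists>xs\<in>tuples M n. \<forall>i\<in>S. holds M \<psi> (xs @ dd i))"
    proof
      assume "\<exists>xs\<in>tuples M n. \<forall>i\<in>S. holds M \<psi> (xs @ dd i)"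
      then obtain xs where "xs \<in> tuples M n" "holds M \<psi> (xs @ dd x)" "holds M \<psi> (xs @ dd y)"
        using S by auto
      then show False using incons S(2) by (cases "x < y") (auto simp: not_less_iff_gr_or_eq)
    qed
  qed
  have hbca: "holds M \<psi> (b @ c @ a)" using hpsi lb lc la hcb hba by simp
  have A1: "forks M n {(\<phi>, map Inr c @ map Inl [0..<n]), (\<phi>, map Inl [0..<n] @ map Inr a)}"
  proof (rule forks_gen, intro allI impI)
    fix xs assume r: "realizes M n xs {(\<phi>, map Inr c @ map Inl [0..<n]), (\<phi>, map Inl [0..<n] @ map Inr a)}"
    then have lx: "length xs = n" by (simp add: realizes_def tuples_def)
    have "holds M \<phi> (c @ xs)" "holds M \<phi> (xs @ a)"
      using r map_arg_val[OF lx, of a] map_arg_val2[OF lx, of c]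
      by (simp_all add: realizes_def holds_p_def)
    then show "holds M \<psi> (xs @ c @ a)" using hpsi lx lc la by simp
  qed
  have A2: "forks M n (tp_over M b (c @ a))"
  proof (rule forks_gen, intro allI impI)
    fix xs assume r: "realizes M n xs (tp_over M b (c @ a))"
    then have lx: "length xs = n" by (simp add: realizes_def tuples_def)
    have "split_pfm n \<psi> (c @ a) \<in> tp_over M b (c @ a)"
      unfolding tp_over_def using fvpsi hbca lb lc la by (auto simp: add.assoc)
    then have "holds_p M (split_pfm n \<psi> (c @ a)) xs" using r by (simp add: realizes_def)
    then show "holds M \<psi> (xs @ c @ a)"
      using map_arg_val[OF lx, of "c@a"] by (simp add: holds_p_def split_pfm_def)
  qed
  show ?thesis using A1 A2 by (simp add: n_def)
qed

end
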